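(* Let $X$ be a finite set, $k$ an integer with $1\le k\le|X|-1$, $\mathfrak{C}$ a nonempty symmetric family of choice functions for $\binom{X}{k}$, and $\mathcal{F}$ the set of (not necessarily simple) averaging functions for $\mathfrak{C}$, with $r(\mathcal{F})=2$. Assume that for every $Y\in\binom{X}{k}$ and all $a_1\ne a_2$ in $Y$ there is $f\in\mathcal{F}_{[2]}$ with $f_Y(a_1,a_2)=a_2$ and $f_Z(b_1,b_2)=b_1$ for all $Z\in\binom{X}{k}$ with $Z\ne Y$ and all $b_1,b_2\in Z$. Then $\mathfrak{C}$ is full, i.e. every choice function for $\binom{X}{k}$ belongs to $\mathfrak{C}$.
   Context: $\binom{X}{k}=\{Y\subseteq X:|Y|=k\}$; choice functions satisfy $c(Y)\in Y$. Symmetric: for every permutation $\pi$ of $X$ and $c\in\mathfrak{C}$, $(\pi*c)(Y)=\pi^{-1}(c(\pi(Y)))$ is in $\mathfrak{C}$. $\mathcal{F}_{[r]}$ is the set of families $f=\langle f_Y:Y\in\binom{X}{k}\rangle$ with $f_Y:Y^r\to Y$, $f_Y(x_1,\dots,x_r)\in\{x_1,\dots,x_r\}$, such that for all $c_1,\dots,c_r\in\mathfrak{C}$, $Y\mapsto f_Y(c_1(Y),\dots,c_r(Y))$ is in $\mathfrak{C}$; $\mathcal{F}=\bigcup_r\mathcal{F}_{[r]}$. $f\in\mathcal{F}_{[r]}$ is a monarchy if for some $t$, $f_Y(\bar x)=x_t$ for all $Y$ and $\bar x\in Y^r$. $r(\mathcal{F})=\min\{r\ge2:\text{some } f\in\mathcal{F}_{[r]}\text{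 is not a monarchy}\}$. Standing assumption: every simple $f\in\mathcal{F}$ (one with $f_Y$ the restriction of a single function independent of $Y$) is a monarchy. *)

theory Defs
  imports Main
begin

definition ksubsets :: "'a set \<Rightarrow> nat \<Rightarrow> 'a set set" where
  "ksubsets X k = {Y. Y \<subseteq> X \<and> card Y = k}"

text \<open>Choice functions for the k-subsets of X, made extensional
  (value undefined outside the domain) so that equality is meaningful.\<close>
definition choice_fun :: "'a set \<Rightarrow> nat \<Rightarrow> ('a set \<Rightarrow> 'a) \<Rightarrow> bool" where
  "choice_fun X k c \<longleftrightarrow>
     (\<forall>Y\<in>ksubsets X k. c Y \<in> Y) \<and> (\<forall>Y. Y \<notin> ksubsets X k \<longrightarrow> c Y = undefined)"

definition perm_act :: "'a set \<Rightarrow> nat \<Rightarrow> ('a \<Rightarrow> 'a) \<Rightarrow> ('a set \<Rightarrow> 'a) \<Rightarrow> ('a set \<Rightarrow> 'a)" where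
  "perm_act X k \<pi> c = (\<lambda>Y. if Y \<in> ksubsets X k then inv_into X \<pi> (c (\<pi> ` Y)) else undefined)"

definition symmetric_family :: "'a set \<Rightarrow> nat \<Rightarrow> ('a set \<Rightarrow> 'a) set \<Rightarrow> bool" where
  "symmetric_family X k C \<longleftrightarrow>
     (\<forall>\<pi> c. bij_betw \<pi> X X \<and> c \<in> C \<longrightarrow> perm_act X k \<pi> c \<in> C)"

text \<open>A family f = (f_Y) of r-ary functions is represented by
  f :: 'a set => 'a list => 'a; f Y xs with length xs = r and set xs \<subseteq> Y is f_Y(xs).
  averaging X k C r f  means  f \<in> F_[r].\<close>
definition averaging :: "'a set \<Rightarrow> nat \<Rightarrow> ('a set \<Rightarrow> 'a) set \<Rightarrow> nat \<Rightarrow> ('a set \<Rightarrow> 'a list \<Rightarrow> 'a) \<Rightarrow> bool" where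
  "averaging X k C r f \<longleftrightarrow>
     (\<forall>Y\<in>ksubsets X k. \<forall>xs. length xs = r \<and> set xs \<subseteq> Y \<longrightarrow> f Y xs \<in> set xs) \<and>
     (\<forall>cs. length cs = r \<and> set cs \<subseteq> C \<longrightarrow>
        (\<lambda>Y. if Y \<in> ksubsets X k then f Y (map (\<lambda>c. c Y) cs) else undefined) \<in> C)"

definition monarchy :: "'a set \<Rightarrow> nat \<Rightarrow> nat \<Rightarrow> ('a set \<Rightarrow> 'a list \<Rightarrow> 'a) \<Rightarrow> bool" where
  "monarchy X k r f \<longleftrightarrow>
     (\<exists>t<r. \<forall>Y\<in>ksubsets X k. \<forall>xs. length xs = r \<and> set xs \<subseteq> Y \<longrightarrow> f Y xs = xs ! t)"

definition simple :: "'a set \<Rightarrow> nat \<Rightarrow> nat \<Rightarrow> ('a set \<Rightarrow> 'a list \<Rightarrow> 'a) \<Rightarrow> bool" where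
  "simple X k r f \<longleftrightarrow>
     (\<exists>g. \<forall>Y\<in>ksubsets X k. \<forall>xs. length xs = r \<and> set xs \<subseteq> Y \<longrightarrow> f Y xs = g xs)"

definition rF :: "'a set \<Rightarrow> nat \<Rightarrow> ('a set \<Rightarrow> 'a) set \<Rightarrow> nat" where
  "rF X k C = (LEAST r. r \<ge> 2 \<and> (\<exists>f. averaging X k C r f \<and> \<not> monarchy X k r f))"

end

theory Submission
  imports Defs
begin

lemma swap_props:
  fixes a b :: 'a
  assumes "a \<in> X" "b \<in> X"
  defines "\<pi> \<equiv> (\<lambda>x. if x = b then a else if x = a then b else x)"
  shows "bij_betw \<pi> X X" "\<And>Y. a \<in> Y \<Longrightarrow> b \<in> Y \<Longrightarrow> \<pi> ` Y = Y" "inv_into X \<pi> b = a"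
proof -
  have inv: "\<And>x. \<pi> (\<pi> x) = x" unfolding \<pi>_def by auto
  have inj: "inj_on \<pi> X" by (metis inj_onI inv)
  have im: "\<And>Y. a \<in> Y \<Longrightarrow> b \<in> Y \<Longrightarrow> \<pi> ` Y = Y"
  proof -
    fix Y assume "a \<in> Y" "b \<in> Y"
    hence sub: "\<pi> ` Y \<subseteq> Y" unfolding \<pi>_def by auto
    have "Y \<subseteq> \<pi> ` Y" using sub inv by (metis image_eqI subsetD subsetI)
    thus "\<pi> ` Y = Y" using sub by blast
  qed
  show "bij_betw \<pi> X X" using inj im[OF assms(1,2)] by (simp add: bij_betw_def)
  show "\<And>Y. a \<in> Y \<Longrightarrow> b \<in> Y \<Longrightarrow> \<pi> ` Y = Y" by (rule im)
  show "inv_into X \<pi> b = a"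
    by (rule inv_into_f_eq[OF inj assms(1)]) (simp add: \<pi>_def)
qed

theorem claim14p20:
  fixes X :: "'a set" and k :: nat and C :: "('a set \<Rightarrow> 'a) set"
  assumes "finite X"
    and "1 \<le> k" and "k \<le> card X - 1"
    and "C \<noteq> {}"
    and "\<forall>c\<in>C. choice_fun X k c"
    and "symmetric_family X k C"
    and "\<forall>r f. averaging X k C r f \<and> simple X k r f \<longrightarrow> monarchy X k r f"
    and "rF X k C = 2"
    and "\<forall>Y\<in>ksubsets X k. \<forall>a1\<in>Y. \<forall>a2\<in>Y. a1 \<noteq> a2 \<longrightarrow>
           (\<exists>f. averaging X k C 2 f \<and> f Y [a1, a2] = a2 \<and>
              (\<forall>Z\<in>ksubsets X k. Z \<noteq> Y \<longrightarrow> (\<forall>b1\<in>Z. \<forall>b2\<in>Z. f Z [b1, b2] = b1)))"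
  shows "\<forall>c. choice_fun X k c \<longrightarrow> c \<in> C"
proof -
  obtain c0 where c0: "c0 \<in> C" using assms(4) by blast
  have ex: "\<exists>c'\<in>C. c' Y = a" if Y: "Y \<in> ksubsets X k" and a: "a \<in> Y" for Y a
  proof -
    have YX: "Y \<subseteq> X" using Y by (simp add: ksubsets_def)
    define b where "b = c0 Y"
    have b: "b \<in> Y" using assms(5) c0 Y by (auto simp: choice_fun_def b_def)
    define \<pi> where "\<pi> = (\<lambda>x. if x = b then a else if x = a then b else x)"
    note sp = swap_props[of a X b, folded \<pi>_def]
    have "perm_act X k \<pi> c0 \<in> C"
      using assms(6) sp(1) a b YX c0 unfolding symmetric_family_def by blast
    moreover have "perm_act X k \<pi> c0 Y = a"
    proof -
      have aX: "a \<in> X" "b \<in> X" using a b YX by auto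
      have "\<pi> ` Y = Y" using sp(2)[OF aX a b] .
      thus ?thesis using sp(3)[OF aX] Y by (simp add: perm_act_def b_def)
    qed
    ultimately show ?thesis by blast
  qed
  have step: "c(Y := a) \<in> C" if c: "c \<in> C" and Y: "Y \<in> ksubsets X k" and a: "a \<in> Y" for c Y a
  proof (cases "c Y = a")
    case True hence "c(Y := a) = c" by auto
    thus ?thesis using c by simp
  next
    case False
    have cY: "c Y \<in> Y" using assms(5) c Y by (auto simp: choice_fun_def)
    obtain c' where c': "c' \<in> C" "c' Y = a" using ex[OF Y a] by blast
    obtain f where f: "averaging X k C 2 f" "f Y [c Y, a] = a"
      "\<forall>Z\<in>ksubsets X k. Z \<noteq> Y \<longrightarrow> (\<forall>b1\<in>Z. \<forall>b2\<in>Z. f Z [b1, b2] = b1)"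
      using bspec[OF bspec[OF bspec[OF assms(9) Y] cY] a] False by (elim impE exE conjE) auto
    have "(\<lambda>Z. if Z \<in> ksubsets X k then f Z (map (\<lambda>c. c Z) [c, c']) else undefined) \<in> C"
    proof -
      have "\<forall>cs. length cs = 2 \<and> set cs \<subseteq> C \<longrightarrow>
        (\<lambda>Y. if Y \<in> ksubsets X k then f Y (map (\<lambda>c. c Y) cs) else undefined) \<in> C"
        using f(1) unfolding averaging_def by blast
      moreover have "length [c, c'] = 2 \<and> set [c, c'] \<subseteq> C" using c c'(1) by simp
      ultimately show ?thesis by blast
    qed
    moreover have "(\<lambda>Z. if Z \<in> ksubsets X k then f Z (map (\<lambda>c. c Z) [c, c']) else undefined) = c(Y := a)"
    proof
      fix Z
      show "(if Z \<in> ksubsets X k then f Z (map (\<lambda>c. c Z) [c, c']) else undefined) = (c(Y := a)) Z"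
      proof (cases "Z \<in> ksubsets X k")
        case True
        then show ?thesis
        proof (cases "Z = Y")
          case False
          have "c Z \<in> Z" "c' Z \<in> Z" using assms(5) c c' True by (auto simp: choice_fun_def)
          then show ?thesis using f(3) True False by simp
        qed (use f(2) c' in simp)
      next
        case False
        then show ?thesis using assms(5) c Y by (auto simp: choice_fun_def)
      qed
    qed
    ultimately show ?thesis by simp
  qed
  have fin: "finite (ksubsets X k)"
    using assms(1) by (rule finite_subset[rotated, OF finite_Pow_iff[THEN iffD2]]) (auto simp: ksubsets_def)
  show ?thesis
  proof (intro allI impI)
    fix d assume d: "choice_fun X k d"
    have "S \<subseteq> ksubsets X k \<Longrightarrow> (\<lambda>Z. if Z \<in> S then d Z else c0 Z) \<in> C" if "finite S" for S
      using that
    proof (induction S rule: finite_induct)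
      case empty then show ?case using c0 by simp
    next
      case (insert Y S)
      have Y: "Y \<in> ksubsets X k" using insert by simp
      have "((\<lambda>Z. if Z \<in> S then d Z else c0 Z)(Y := d Y)) \<in> C"
      proof -
        have dY: "d Y \<in> Y" using d Y by (simp add: choice_fun_def)
        have S: "S \<subseteq> ksubsets X k" using insert.prems by simp
        show ?thesis by (rule step[OF insert.IH[OF S] Y dY])
      qed
      moreover have "(\<lambda>Z. if Z \<in> S then d Z else c0 Z)(Y := d Y) = (\<lambda>Z. if Z \<in> insert Y S then d Z else c0 Z)"
        by auto
      ultimately show ?case by simp
    qed
    from this[OF fin] have "(\<lambda>Z. if Z \<in> ksubsets X k then d Z else c0 Z) \<in> C" by simp
    moreover have "(\<lambda>Z. if Z \<in> ksubsets X k then d Z else c0 Z) = d"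
    proof
      fix Z
      have "choice_fun X k c0" using assms(5) c0 by blast
      thus "(if Z \<in> ksubsets X k then d Z else c0 Z) = d Z" using d by (simp add: choice_fun_def)
    qed
    ultimately show "d \<in> C" by simp
  qed
qed

end
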